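(* Let $q$ be a prime power. Every $2$-$(n,k,\lambda)_q$ design is additive under $\mathrm{EA}(q^n)$.
   Context: A $2$-$(n,k,\lambda)_q$ design (subspace design) is a $2$-$\left(\frac{q^n-1}{q-1},\frac{q^k-1}{q-1},\lambda\right)$ design whose points are the points of $\mathrm{PG}(n-1,q)$ and whose blocks are (point sets of) certain $(k-1)$-dimensional projective subspaces of $\mathrm{PG}(n-1,q)$, such that every pair of distinct points lies in exactly $\lambda$ blocks. $\mathrm{EA}(q^n)$ denotes the elementary abelian group of order $q^n$. A design $(V,\mathscr B)$ is additive under an abelian group $G$ if there is an injective map $f:V\to G$ such that $\sum_{x\in B}f(x)=0$ for every block $B\in\mathscr B$. *)

theory Defs
  imports "HOL-Analysis.Analysis"
begin

text \<open>Points of PG(n-1,q): the one-dimensional subspaces of F_q^n, where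
  F_q is a finite field (type 'a) and n = CARD('n).\<close>
definition pg_points :: "('a::field ^ 'n) set set" where
  "pg_points = {vec.span {v} | v. v \<noteq> 0}"

definition points_of :: "('a::field ^ 'n) set \<Rightarrow> ('a ^ 'n) set set" where
  "points_of W = {P \<in> pg_points. P \<subseteq> W}"

text \<open>2-(n,k,lambda)_q design: blocks are point sets of (k-1)-dim projective subspaces,
  i.e. of k-dimensional vector subspaces, and every pair of distinct points lies
  in exactly lambda blocks (lambda a positive integer).\<close>
definition subspace_design_2 ::
  "nat \<Rightarrow> nat \<Rightarrow> ('a::field ^ 'n) set set set \<Rightarrow> bool" where
  "subspace_design_2 k lam B \<longleftrightarrow>
     lam \<ge> 1 \<and>
     (\<forall>b\<in>B. \<exists>W. vec.subspace W \<and> vec.dim W = k \<and> b = points_of W) \<and>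
     (\<forall>P\<in>pg_points. \<forall>Q\<in>pg_points. P \<noteq> Q \<longrightarrow> card {b\<in>B. P \<in> b \<and> Q \<in> b} = lam)"

definition additive_under :: "'p set \<Rightarrow> 'p set set \<Rightarrow> ('p \<Rightarrow> 'g::ab_group_add) \<Rightarrow> bool" where
  "additive_under V B f \<longleftrightarrow> inj_on f V \<and> (\<forall>b\<in>B. (\<Sum>x\<in>b. f x) = 0)"

end

theory Submission
  imports Defs "HOL-Algebra.Algebraic_Closure_Type" "HOL-Number_Theory.Residues"
begin

lemma ff_card_ge2: "CARD('a::{finite,field}) \<ge> 2"
proof -
  have "{0::'a, 1} \<subseteq> UNIV" by simp
  hence "card {0::'a, 1} \<le> CARD('a)" by (intro card_mono) auto
  thus ?thesis by simp
qed

lemma ff_pow_card: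
  fixes x :: "'a::{finite,field}"
  shows "x ^ CARD('a) = x"
proof (cases "x = 0")
  case False
  have "x * (\<Prod>y\<in>UNIV-{0}. x * y) = x * x ^ (card (UNIV :: 'a set) - 1) * \<Prod>(UNIV-{0})"
    by (simp add: prod.distrib mult_ac)
  also have "x * x ^ (card (UNIV :: 'a set) - 1) = x ^ Suc (card (UNIV :: 'a set) - 1)"
    by (subst power_Suc) auto
  also have "Suc (card (UNIV :: 'a set) - 1) = card (UNIV :: 'a set)"
    using finite_UNIV_card_ge_0[where ?'a = 'a] by simp
  also have "(\<Prod>y\<in>UNIV-{0}. x * y) = (\<Prod>y\<in>UNIV-{0}. y)"
    by (rule prod.reindex_bij_witness[of _ "\<lambda>y. y / x" "\<lambda>y. x * y"]) (use False in auto)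
  finally show ?thesis
    by simp
qed (use finite_UNIV_card_ge_0[where ?'a = 'a] in auto)

lemma ff_pow_card_m1:
  fixes x :: "'a::{finite,field}"
  assumes "x \<noteq> 0"
  shows "x ^ (CARD('a) - 1) = 1"
proof -
  have q2: "CARD('a) \<ge> 2" by (rule ff_card_ge2)
  have "x * x ^ (CARD('a) - 1) = x ^ Suc (CARD('a) - 1)" by (simp only: power_Suc)
  also have "Suc (CARD('a) - 1) = CARD('a)" using q2 by simp
  finally have "x * x ^ (CARD('a) - 1) = x * 1" using ff_pow_card[of x] by simp
  thus ?thesis using assms by simp
qed

lemma ff_of_nat_card: "of_nat CARD('a) = (0::'a::{finite,field})"
  using CHAR_dvd_CARD[where 'a='a] of_nat_eq_0_iff_char_dvd by blast

lemma ff_powsum_0: "(\<Sum>t::'a::{finite,field}\<in>UNIV. t ^ 0) = 0"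
  by (simp add: ff_of_nat_card)

lemma ff_powsum_mid:
  assumes "0 < j" "j < CARD('a::{finite,field}) - 1"
  shows "(\<Sum>t::'a\<in>UNIV. t ^ j) = 0"
proof -
  define R :: "'a poly" where "R = Polynomial.monom 1 j + [:-1:]"
  have degR: "Polynomial.degree R = j" using assms unfolding R_def
    by (subst degree_add_eq_left) (auto simp: degree_monom_eq)
  have "R \<noteq> 0" using degR assms by auto
  hence "card {x. poly R x = 0} \<le> j" using card_poly_roots_bound[of R] degR by simp
  moreover have "{x. poly R x = 0} = {x. x ^ j = 1}" unfolding R_def by (auto simp: poly_monom)
  ultimately have c1: "card {x::'a. x ^ j = 1} \<le> j" by simp
  have nsub: "\<not> (UNIV - {0::'a} \<subseteq> {x. x ^ j = 1})"
  proof
    assume "UNIV - {0::'a} \<subseteq> {x. x ^ j = 1}"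
    hence le: "card (UNIV - {0::'a}) \<le> card {x::'a. x ^ j = 1}" by (rule card_mono[OF finite])
    have "card (UNIV - {0::'a}) = CARD('a) - 1" by (simp add: card_Diff_singleton)
    with le c1 assms show False by linarith
  qed
  obtain c :: 'a where c: "c \<noteq> 0" "c ^ j \<noteq> 1"
  proof -
    from nsub obtain c where "c \<in> UNIV - {0::'a}" "c \<notin> {x. x ^ j = 1}"
      unfolding subset_iff by blast
    thus ?thesis using that by simp
  qed
  have inj: "inj ((*) c)"
  proof (rule injI)
    fix x y assume "c * x = c * y" thus "x = y" using c(1) by simp
  qed
  have surj: "range ((*) c) = UNIV"
  proof -
    have "y \<in> range ((*) c)" for y
    proof -
      have "y = c * (y / c)" using c(1) by simp
      thus ?thesis by (rule image_eqI) simp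
    qed
    thus ?thesis by blast
  qed
  have "(\<Sum>t\<in>UNIV. (c * t) ^ j) = (\<Sum>t\<in>range ((*) c). t ^ j)"
    by (subst sum.reindex[OF inj]) (simp add: o_def)
  hence "(\<Sum>t\<in>UNIV. t ^ j) = (\<Sum>t\<in>UNIV. (c * t) ^ j)" using surj by simp
  also have "\<dots> = c ^ j * (\<Sum>t\<in>UNIV. t ^ j)"
    by (simp add: power_mult_distrib sum_distrib_left)
  finally have "(1 - c ^ j) * (\<Sum>t\<in>UNIV. t ^ j) = 0" by (simp add: algebra_simps)
  thus ?thesis using c by simp
qed

lemma ff_powsum_top: "(\<Sum>t::'a::{finite,field}\<in>UNIV. t ^ (CARD('a) - 1)) = -1"
proof -
  have q2: "CARD('a) \<ge> 2" by (rule ff_card_ge2)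
  have "(\<Sum>t::'a\<in>UNIV. t ^ (CARD('a) - 1)) = (\<Sum>t\<in>insert 0 (UNIV - {0::'a}). t ^ (CARD('a) - 1))"
    by (simp add: insert_absorb)
  also have "\<dots> = 0 ^ (CARD('a) - 1) + (\<Sum>t\<in>UNIV - {0::'a}. t ^ (CARD('a) - 1))"
    by (subst sum.insert) auto
  also have "0 ^ (CARD('a) - 1) = (0::'a)" using q2 by simp
  also have "(\<Sum>t\<in>UNIV - {0::'a}. t ^ (CARD('a) - 1)) = (\<Sum>t\<in>UNIV - {0::'a}. 1)"
    by (rule sum.cong[OF refl], rule ff_pow_card_m1) auto
  also have "\<dots> = of_nat (CARD('a) - 1)" by (simp add: card_Diff_singleton)
  also have "\<dots> = of_nat CARD('a) - 1" using q2 by (simp add: of_nat_diff)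
  finally show ?thesis by (simp add: ff_of_nat_card)
qed

lemma ff_choose_zero:
  assumes "0 < i" "i < CARD('a::{finite,field})"
  shows "of_nat (CARD('a) choose i) = (0::'a)"
proof -
  define q where "q = CARD('a)"
  define D :: "'a poly" where "D = (\<Sum>k\<in>{1..<q}. Polynomial.monom (of_nat (q choose k)) k)"
  have degD: "Polynomial.degree D < q"
  proof -
    have "Polynomial.degree D \<le> q - 1" unfolding D_def
      by (intro degree_sum_le) (auto intro: order.trans[OF degree_monom_le])
    thus ?thesis using ff_card_ge2[where 'a='a] unfolding q_def by linarith
  qed
  have "poly D x = 0" for x
  proof -
    have "(x + 1) ^ q = (\<Sum>k\<le>q. of_nat (q choose k) * x ^ k * 1 ^ (q - k))"
      by (rule binomial_ring)
    also have "\<dots> = (\<Sum>k\<in>insert 0 (insert q {1..<q}). of_nat (q choose k) * x ^ k)"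
      by (intro sum.cong) auto
    also have "\<dots> = 1 + x ^ q + poly D x"
      using ff_card_ge2[where 'a='a] unfolding q_def D_def
      by (simp add: poly_sum poly_monom)
    finally have "(x + 1) ^ q = 1 + x ^ q + poly D x" .
    thus ?thesis using ff_pow_card[of x] ff_pow_card[of "x+1"] unfolding q_def by simp
  qed
  hence "D = 0" using degD
    by (intro poly_eqI_degree[of UNIV]) (auto simp: q_def)
  hence "Polynomial.coeff D i = 0" by simp
  moreover have "Polynomial.coeff D i = of_nat (q choose i)"
    unfolding D_def using assms by (simp add: coeff_sum q_def)
  ultimately show ?thesis by (simp add: q_def)
qed

section \<open>Frobenius in the algebraic closure\<close>

lemma card_pow_pos: "CARD('a::{finite,field}) ^ m > 0"
  using finite_UNIV_card_ge_0[where 'a='a] by simp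

lemma to_ac_of_nat_card: "(of_nat CARD('a) :: 'a::{finite,field} alg_closure) = 0"
proof -
  have "(of_nat CARD('a) :: 'a alg_closure) = to_ac (of_nat CARD('a) :: 'a)" by simp
  also have "\<dots> = 0" by (simp only: ff_of_nat_card to_ac_0)
  finally show ?thesis .
qed

lemma ac_frob:
  fixes x y :: "'a::{finite,field} alg_closure"
  shows "(x + y) ^ CARD('a) = x ^ CARD('a) + y ^ CARD('a)"
proof -
  have q2: "CARD('a) \<ge> 2" by (rule ff_card_ge2)
  have "(x + y) ^ CARD('a) = (\<Sum>k\<le>CARD('a). of_nat (CARD('a) choose k) * x ^ k * y ^ (CARD('a) - k))"
    by (rule binomial_ring)
  also have "\<dots> = (\<Sum>k\<in>{0, CARD('a)}. of_nat (CARD('a) choose k) * x ^ k * y ^ (CARD('a) - k))"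
  proof (rule sum.mono_neutral_right)
    show "\<forall>k\<in>{..CARD('a)} - {0, CARD('a)}. of_nat (CARD('a) choose k) * x ^ k * y ^ (CARD('a) - k) = 0"
    proof
      fix k assume "k \<in> {..CARD('a)} - {0, CARD('a)}"
      hence k: "0 < k" "k < CARD('a)" by auto
      have "(of_nat (CARD('a) choose k) :: 'a alg_closure) = to_ac (of_nat (CARD('a) choose k) :: 'a)"
        by simp
      also have "\<dots> = 0" by (simp only: ff_choose_zero[OF k] to_ac_0)
      finally show "of_nat (CARD('a) choose k) * x ^ k * y ^ (CARD('a) - k) = 0" by simp
    qed
  qed auto
  also have "\<dots> = y ^ CARD('a) + x ^ CARD('a)" using q2 by simp
  finally show ?thesis by (simp add: add.commute)
qed

lemma ac_frob_pow:
  fixes x y :: "'a::{finite,field} alg_closure"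
  shows "(x + y) ^ (CARD('a) ^ m) = x ^ (CARD('a) ^ m) + y ^ (CARD('a) ^ m)"
proof (induction m)
  case 0 show ?case by simp
next
  case (Suc m)
  have "(x + y) ^ (CARD('a) ^ Suc m) = ((x + y) ^ (CARD('a) ^ m)) ^ CARD('a)"
    by (simp only: power_Suc2 power_mult)
  also have "\<dots> = (x ^ (CARD('a) ^ m) + y ^ (CARD('a) ^ m)) ^ CARD('a)" using Suc by simp
  also have "\<dots> = (x ^ (CARD('a) ^ m)) ^ CARD('a) + (y ^ (CARD('a) ^ m)) ^ CARD('a)"
    by (rule ac_frob)
  also have "\<dots> = x ^ (CARD('a) ^ Suc m) + y ^ (CARD('a) ^ Suc m)"
    by (simp only: power_Suc2 power_mult)
  finally show ?case .
qed

lemma ac_frob_sum: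
  fixes f :: "'b \<Rightarrow> 'a::{finite,field} alg_closure"
  shows "(\<Sum>i\<in>A. f i) ^ (CARD('a) ^ m) = (\<Sum>i\<in>A. f i ^ (CARD('a) ^ m))"
proof (induction A rule: infinite_finite_induct)
  case (infinite A) thus ?case using card_pow_pos[where 'a='a and m=m] by simp
next
  case empty thus ?case using card_pow_pos[where 'a='a and m=m] by simp
next
  case (insert x F) thus ?case by (simp add: ac_frob_pow)
qed

lemma ac_frob_neg:
  fixes x :: "'a::{finite,field} alg_closure"
  shows "(- x) ^ (CARD('a) ^ m) = - (x ^ (CARD('a) ^ m))"
proof -
  have "(x + - x) ^ (CARD('a) ^ m) = x ^ (CARD('a) ^ m) + (- x) ^ (CARD('a) ^ m)"
    by (rule ac_frob_pow)
  moreover have "(x + - x) ^ (CARD('a) ^ m) = 0" using card_pow_pos[where 'a='a and m=m] by simp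
  ultimately show ?thesis by (simp add: eq_neg_iff_add_eq_0 add.commute)
qed

lemma ff_pow_card_pow:
  fixes c :: "'a::{finite,field}"
  shows "c ^ (CARD('a) ^ m) = c"
proof (induction m)
  case 0 show ?case by simp
next
  case (Suc m)
  have "c ^ (CARD('a) ^ Suc m) = (c ^ (CARD('a) ^ m)) ^ CARD('a)"
    by (simp only: power_Suc2 power_mult)
  also have "\<dots> = c" using Suc by (simp add: ff_pow_card)
  finally show ?case .
qed

lemma to_ac_frob: "to_ac (c::'a::{finite,field}) ^ (CARD('a) ^ m) = to_ac c"
proof -
  have "to_ac c ^ (CARD('a) ^ m) = to_ac (c ^ (CARD('a) ^ m))" by simp
  also have "\<dots> = to_ac c" by (simp only: ff_pow_card_pow)
  finally show ?thesis .
qed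

section \<open>The subfield of order q^m\<close>

lemma K_card:
  assumes "m \<ge> 1"
  shows "card {x::'a::{finite,field} alg_closure. x ^ (CARD('a) ^ m) = x} = CARD('a) ^ m"
proof -
  define Q where "Q = CARD('a) ^ m"
  have q2: "CARD('a) \<ge> 2" by (rule ff_card_ge2)
  have "CARD('a) ^ 1 \<le> CARD('a) ^ m" using assms q2 by (intro power_increasing) auto
  hence Q2: "Q \<ge> 2" using q2 unfolding Q_def by simp
  define P :: "'a alg_closure poly" where "P = Polynomial.monom 1 Q + [:0, -1:]"
  have degP: "Polynomial.degree P = Q" unfolding P_def
    by (subst degree_add_eq_left) (use Q2 in \<open>auto simp: degree_monom_eq\<close>)
  have P0: "P \<noteq> 0" using degP Q2 by auto
  have polyP: "poly P x = x ^ Q - x" for x by (simp add: P_def poly_monom)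
  have roots: "{x. poly P x = 0} = {x. x ^ Q = x}" by (simp add: polyP)
  have ub: "card {x. poly P x = 0} \<le> Q" using card_poly_roots_bound[OF P0] degP by simp
  have ofQ: "(of_nat Q :: 'a alg_closure) = 0"
    using assms by (simp add: Q_def of_nat_power to_ac_of_nat_card)
  have dP: "poly (pderiv P) x = -1" for x
    by (simp add: P_def pderiv_add pderiv_monom pderiv_pCons poly_monom ofQ)
  have ord1: "Polynomial.order a P \<le> 1" for a
  proof (rule ccontr)
    assume "\<not> Polynomial.order a P \<le> 1"
    hence "2 \<le> Polynomial.order a P" by simp
    hence "[:-a, 1:] ^ 2 dvd P" by (simp add: order_divides)
    then obtain R where R: "P = [:-a, 1:] ^ 2 * R" by (elim dvdE)
    have R': "P = ([:-a, 1:] * [:-a, 1:]) * R" using R by (simp only: power2_eq_square)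
    have "pderiv P = ([:-a, 1:] * [:-a, 1:]) * pderiv R
        + R * ([:-a, 1:] * pderiv [:-a, 1:] + [:-a, 1:] * pderiv [:-a, 1:])"
      by (simp only: R' pderiv_mult)
    hence "poly (pderiv P) a = 0" by (simp only: poly_mult poly_add) simp
    with dP[of a] show False by simp
  qed
  obtain k where Qk: "Q = Suc (Suc k)" using Q2 by (metis add_2_eq_Suc le_Suc_ex)
  have lc: "Polynomial.lead_coeff P = 1" using degP by (simp add: P_def Qk)
  obtain A where A: "size A = Polynomial.degree P"
      "P = Polynomial.smult (Polynomial.lead_coeff P) (\<Prod>x\<in>#A. [:-x, 1:])"
    using alg_closed_imp_factorization[OF P0] by blast
  have prA: "proots (\<Prod>x\<in>#A. [:-x, 1:]) = A" for A :: "'a alg_closure multiset"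
  proof (induction A)
    case empty thus ?case by simp
  next
    case (add x A)
    have nz: "(\<Prod>x\<in>#A. [:-x, 1:]) \<noteq> 0" by (auto simp: prod_mset_zero_iff)
    have "proots (\<Prod>x\<in>#add_mset x A. [:-x, 1:]) = proots ([:-x, 1:] * (\<Prod>x\<in>#A. [:-x, 1:]))"
      by simp
    also have "\<dots> = proots [:-x, 1:] + proots (\<Prod>x\<in>#A. [:-x, 1:])"
      by (rule proots_mult) (use nz in auto)
    also have "\<dots> = add_mset x A" using add by simp
    finally show ?case .
  qed
  have prP: "proots P = A" using A(2) lc prA by simp
  have cnt: "count (proots P) a \<le> 1" for a
    using ord1[of a] P0 by simp
  have "Q = size (proots P)" using A(1) degP prP by simp
  also have "\<dots> = sum (count (proots P)) (set_mset (proots P))"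
    by (simp add: size_multiset_overloaded_eq)
  also have "\<dots> \<le> sum (\<lambda>_. 1) (set_mset (proots P))"
    by (intro sum_mono cnt)
  also have "\<dots> = card {x. poly P x = 0}" using P0 by simp
  finally have lb: "Q \<le> card {x. poly P x = 0}" .
  from ub lb roots show ?thesis unfolding Q_def by simp
qed

section \<open>The vector space structure and the map psi\<close>

definition acs :: "'a::field \<Rightarrow> 'a alg_closure \<Rightarrow> 'a alg_closure" where
  "acs c x = to_ac c * x"

interpretation acv: vector_space "acs :: 'a::field \<Rightarrow> 'a alg_closure \<Rightarrow> 'a alg_closure"
  by unfold_locales (simp_all add: acs_def algebra_simps)

lemma exists_psi:
  "\<exists>\<psi> :: 'a::{finite,field} ^ 'n \<Rightarrow> 'a alg_closure.
     (\<forall>v w. \<psi> (v + w) = \<psi> v + \<psi> w) \<and> (\<forall>c v. \<psi> (c *s v) = to_ac c * \<psi> v) \<and> inj \<psi> \<and>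
     range \<psi> = {x. x ^ (CARD('a) ^ CARD('n)) = x}"
proof -
  define Q where "Q = CARD('a) ^ CARD('n)"
  define K where "K = {x::'a alg_closure. x ^ Q = x}"
  have q2: "CARD('a) \<ge> 2" by (rule ff_card_ge2)
  have n1: "CARD('n) \<ge> 1" using finite_UNIV_card_ge_0[where 'a='n] by simp
  have cardK: "card K = Q" unfolding K_def Q_def by (rule K_card[OF n1])
  have Qpos: "Q > 0" unfolding Q_def by (rule card_pow_pos)
  have finK: "finite K" using cardK Qpos by (intro card_ge_0_finite) simp
  have K0: "0 \<in> K" using Qpos by (simp add: K_def)
  have Kadd: "x + y \<in> K" if "x \<in> K" "y \<in> K" for x y
    using that by (simp add: K_def Q_def ac_frob_pow)
  have Kscale: "acs c x \<in> K" if "x \<in> K" for c x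
    using that by (simp add: K_def Q_def acs_def power_mult_distrib to_ac_frob)
  have subK: "acv.subspace K"
    by (rule acv.subspaceI) (auto intro: K0 Kadd Kscale)
  obtain Bs where Bs: "Bs \<subseteq> K" "acv.independent Bs" "K \<subseteq> acv.span Bs" "card Bs = acv.dim K"
    using acv.basis_exists by blast
  have finBs: "finite Bs" using finK Bs(1) finite_subset by blast
  define lc where "lc u = (\<Sum>v\<in>Bs. acs (u v) v)" for u
  have spanEq: "acv.span Bs = range lc" unfolding lc_def by (rule acv.span_finite[OF finBs])
  have "acv.span Bs \<subseteq> lc ` (PiE Bs (\<lambda>_. UNIV))"
  proof
    fix x assume "x \<in> acv.span Bs"
    then obtain u where x: "x = lc u" using spanEq by auto
    have "restrict u Bs \<in> PiE Bs (\<lambda>_. UNIV)" by simp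
    moreover have "x = lc (restrict u Bs)" unfolding x lc_def
      by (intro sum.cong) auto
    ultimately show "x \<in> lc ` (PiE Bs (\<lambda>_. UNIV))" by blast
  qed
  hence "K \<subseteq> lc ` (PiE Bs (\<lambda>_. UNIV))" using Bs(3) by blast
  hence "card K \<le> card (lc ` (PiE Bs (\<lambda>_. UNIV)))"
    by (intro card_mono finite_imageI finite_PiE finBs) auto
  also have "\<dots> \<le> card (PiE Bs (\<lambda>_. UNIV :: 'a set))" by (rule card_image_le) (simp add: finite_PiE finBs)
  also have "\<dots> = CARD('a) ^ card Bs" by (simp add: card_PiE finBs)
  finally have "CARD('a) ^ CARD('n) \<le> CARD('a) ^ card Bs" using cardK by (simp add: Q_def)
  hence nle: "CARD('n) \<le> card Bs" by (rule power_le_imp_le_exp[rotated]) (use q2 in simp)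
  obtain e :: "'n \<Rightarrow> 'a alg_closure" where e: "e ` UNIV \<subseteq> Bs" "inj e"
    using card_le_inj[OF finite_class.finite_UNIV finBs nle] by blast
  define \<psi> where "\<psi> v = (\<Sum>i\<in>UNIV. to_ac (v $ i) * e i)" for v :: "'a^'n"
  have add: "\<psi> (v + w) = \<psi> v + \<psi> w" for v w
    by (simp add: \<psi>_def sum.distrib distrib_right)
  have scale: "\<psi> (c *s v) = to_ac c * \<psi> v" for c v
    by (simp add: \<psi>_def sum_distrib_left mult.assoc)
  have inj: "inj \<psi>"
  proof (rule injI)
    fix v w assume eq: "\<psi> v = \<psi> w"
    show "v = w"
    proof (rule ccontr)
      assume "v \<noteq> w"
      then obtain i0 where i0: "v $ i0 \<noteq> w $ i0" by (auto simp: vec_eq_iff)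
      define u where "u b = (v - w) $ (inv_into UNIV e b)" for b
      have "(\<Sum>b\<in>e ` UNIV. acs (u b) b) = (\<Sum>i\<in>UNIV. acs (u (e i)) (e i))"
        by (simp add: sum.reindex[OF e(2)])
      also have "\<dots> = (\<Sum>i\<in>UNIV. to_ac (v $ i) * e i - to_ac (w $ i) * e i)"
        by (intro sum.cong refl) (simp add: u_def acs_def inv_f_f[OF e(2)] algebra_simps)
      also have "\<dots> = \<psi> v - \<psi> w" by (simp add: \<psi>_def sum_subtractf)
      also have "\<dots> = 0" using eq by simp
      finally have s0: "(\<Sum>b\<in>e ` UNIV. acs (u b) b) = 0" .
      have "u (e i0) \<noteq> 0" using i0 by (simp add: u_def inv_f_f[OF e(2)])
      hence "acv.dependent (e ` UNIV)"
        using s0 by (subst acv.dependent_finite) (auto intro!: exI[of _ u])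
      moreover have "acv.independent (e ` UNIV)" by (rule acv.independent_mono[OF Bs(2) e(1)])
      ultimately show False by blast
    qed
  qed
  have rsub: "range \<psi> \<subseteq> K"
  proof
    fix x assume "x \<in> range \<psi>"
    then obtain v where x: "x = \<psi> v" by blast
    have "\<psi> v = (\<Sum>i\<in>UNIV. acs (v $ i) (e i))" by (simp add: \<psi>_def acs_def)
    also have "\<dots> \<in> K"
      by (intro acv.subspace_sum[OF subK] acv.subspace_scale[OF subK]) (use e(1) Bs(1) in blast)
    finally show "x \<in> K" using x by simp
  qed
  have "card (range \<psi>) = CARD('a ^ 'n)" by (rule card_image[OF inj_on_subset[OF inj]]) simp
  hence "card (range \<psi>) = card K" using cardK by (simp add: Q_def)
  hence "range \<psi> = K" by (rule card_subset_eq[OF finK rsub])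
  thus ?thesis using add scale inj unfolding K_def Q_def by blast
qed

section \<open>Power sums along affine lines\<close>

lemma ff_powsum_lt:
  assumes "k < CARD('a::{finite,field}) - 1"
  shows "(\<Sum>t::'a\<in>UNIV. t ^ k) = 0"
proof (cases "k = 0")
  case True thus ?thesis using ff_powsum_0[where 'a='a] by simp
next
  case False thus ?thesis using ff_powsum_mid[of k] assms by simp
qed

lemma powsum_shift:
  fixes A B :: "'a::{finite,field} alg_closure"
  shows "(\<Sum>t\<in>(UNIV::'a set). (A + to_ac t * B) ^ (CARD('a) - 1)) = - (B ^ (CARD('a) - 1))"
proof -
  define n where "n = CARD('a) - 1"
  have n1: "n \<ge> 1" using ff_card_ge2[where 'a='a] by (simp add: n_def)
  define cf where "cf k = of_nat (n choose k) * B ^ k * A ^ (n - k)" for k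
  have "(\<Sum>t\<in>(UNIV::'a set). (A + to_ac t * B) ^ n)
      = (\<Sum>t\<in>(UNIV::'a set). \<Sum>k\<le>n. of_nat (n choose k) * (to_ac t * B) ^ k * A ^ (n - k))"
    by (intro sum.cong refl) (subst add.commute, rule binomial_ring)
  also have "\<dots> = (\<Sum>t\<in>(UNIV::'a set). \<Sum>k\<le>n. cf k * to_ac (t ^ k))"
    by (intro sum.cong refl) (simp add: cf_def power_mult_distrib mult_ac)
  also have "\<dots> = (\<Sum>k\<le>n. \<Sum>t\<in>(UNIV::'a set). cf k * to_ac (t ^ k))"
    by (rule sum.swap)
  also have "\<dots> = (\<Sum>k\<le>n. cf k * to_ac (\<Sum>t\<in>(UNIV::'a set). t ^ k))"
    by (intro sum.cong refl) (simp only: sum_distrib_left to_ac_sum)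
  also have "\<dots> = (\<Sum>k\<in>{n}. cf k * to_ac (\<Sum>t\<in>(UNIV::'a set). t ^ k))"
  proof (rule sum.mono_neutral_right)
    show "\<forall>k\<in>{..n} - {n}. cf k * to_ac (\<Sum>t\<in>(UNIV::'a set). t ^ k) = 0"
    proof
      fix k assume "k \<in> {..n} - {n}"
      hence "k < CARD('a) - 1" by (auto simp: n_def)
      hence "(\<Sum>t\<in>(UNIV::'a set). t ^ k) = 0" by (rule ff_powsum_lt)
      thus "cf k * to_ac (\<Sum>t\<in>(UNIV::'a set). t ^ k) = 0" by simp
    qed
  qed auto
  also have "\<dots> = cf n * to_ac (-1)" unfolding n_def using ff_powsum_top[where 'a='a] by simp
  also have "\<dots> = - (B ^ n)" by (simp add: cf_def)
  finally show ?thesis unfolding n_def .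
qed

definition rep :: "('a::field ^ 'n) set \<Rightarrow> 'a ^ 'n" where
  "rep P = (SOME v. v \<noteq> 0 \<and> P = vec.span {v})"

lemma rep:
  assumes "P \<in> pg_points"
  shows "rep P \<noteq> 0" "P = vec.span {rep P}"
proof -
  have "\<exists>v. v \<noteq> 0 \<and> P = vec.span {v}" using assms by (auto simp: pg_points_def)
  hence "rep P \<noteq> 0 \<and> P = vec.span {rep P}" unfolding rep_def by (rule someI_ex)
  thus "rep P \<noteq> 0" "P = vec.span {rep P}" by auto
qed

lemma span_scale_eq:
  fixes v :: "'a::field ^ 'n"
  assumes "c \<noteq> 0"
  shows "vec.span {c *s v} = vec.span {v}"
  unfolding vec.span_singleton
proof (rule subset_antisym)
  show "range (\<lambda>k. k *s (c *s v)) \<subseteq> range (\<lambda>k. k *s v)"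
  proof
    fix x assume "x \<in> range (\<lambda>k. k *s (c *s v))"
    then obtain k where "x = k *s (c *s v)" by blast
    hence "x = (k * c) *s v" by simp
    thus "x \<in> range (\<lambda>k. k *s v)" by blast
  qed
next
  show "range (\<lambda>k. k *s v) \<subseteq> range (\<lambda>k. k *s (c *s v))"
  proof
    fix x assume "x \<in> range (\<lambda>k. k *s v)"
    then obtain k where "x = k *s v" by blast
    hence "x = (k / c) *s (c *s v)" using assms by simp
    thus "x \<in> range (\<lambda>k. k *s (c *s v))" by blast
  qed
qed

section \<open>The map psi and sums over subspaces\<close>

locale psi_setup =
  fixes \<psi> :: "'a::{finite,field} ^ 'n \<Rightarrow> 'a alg_closure"
  assumes psi_add: "\<psi> (v + w) = \<psi> v + \<psi> w"
    and psi_scale: "\<psi> (c *s v) = to_ac c * \<psi> v"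
    and psi_inj: "inj \<psi>"
    and psi_range: "range \<psi> = {x. x ^ (CARD('a) ^ CARD('n)) = x}"
begin

definition hh :: "'a ^ 'n \<Rightarrow> 'a alg_closure" where
  "hh v = \<psi> v ^ (CARD('a) - 1)"

lemma psi_0: "\<psi> 0 = 0"
proof -
  have e: "\<psi> 0 = \<psi> 0 + \<psi> 0" using psi_add[of 0 0] by (simp only: add_0_left)
  show ?thesis using add_cancel_right_right[of "\<psi> 0" "\<psi> 0"] e by blast
qed

lemma psi_nz: "v \<noteq> 0 \<Longrightarrow> \<psi> v \<noteq> 0"
  using psi_inj psi_0 by (metis injD)

lemma psi_sum: "\<psi> (\<Sum>i\<in>A. f i) = (\<Sum>i\<in>A. \<psi> (f i))"
  by (induction A rule: infinite_finite_induct) (simp_all add: psi_0 psi_add)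

lemma hh_0: "hh 0 = 0"
  using ff_card_ge2[where 'a='a] by (simp add: hh_def psi_0)

lemma hh_nz: "v \<noteq> 0 \<Longrightarrow> hh v \<noteq> 0"
  by (simp add: hh_def psi_nz)

lemma hh_scale:
  assumes "c \<noteq> 0"
  shows "hh (c *s v) = hh v"
proof -
  have "hh (c *s v) = to_ac c ^ (CARD('a) - 1) * hh v"
    by (simp add: hh_def psi_scale power_mult_distrib)
  also have "to_ac c ^ (CARD('a) - 1) = to_ac (c ^ (CARD('a) - 1))" by simp
  also have "c ^ (CARD('a) - 1) = 1" by (rule ff_pow_card_m1[OF assms])
  finally show ?thesis by simp
qed

lemma hh_range: "hh v \<in> range \<psi>"
proof -
  define Q where "Q = CARD('a) ^ CARD('n)"
  have "\<psi> v \<in> range \<psi>" by simp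
  hence pv: "\<psi> v ^ Q = \<psi> v" using psi_range by (simp add: Q_def)
  have "(\<psi> v ^ (CARD('a) - 1)) ^ Q = (\<psi> v ^ Q) ^ (CARD('a) - 1)"
    by (simp only: power_mult[symmetric]) (simp add: mult.commute)
  also have "\<dots> = \<psi> v ^ (CARD('a) - 1)" by (simp only: pv)
  finally have "hh v ^ Q = hh v" by (simp add: hh_def)
  thus ?thesis using psi_range by (simp add: Q_def)
qed

lemma hh_eq:
  assumes v: "v \<noteq> 0" and w: "w \<noteq> 0" and eq: "hh v = hh w"
  shows "\<exists>c. c \<noteq> 0 \<and> w = c *s v"
proof -
  have q2: "CARD('a) \<ge> 2" by (rule ff_card_ge2)
  define r where "r = \<psi> w / \<psi> v"
  have pv: "\<psi> v \<noteq> 0" by (rule psi_nz[OF v])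
  have pw: "\<psi> w \<noteq> 0" by (rule psi_nz[OF w])
  have r0: "r \<noteq> 0" using pv pw by (simp add: r_def)
  have "r ^ (CARD('a) - 1) = hh w / hh v" by (simp add: r_def hh_def power_divide)
  also have "\<dots> = 1" using eq hh_nz[OF v] by simp
  finally have r1: "r ^ (CARD('a) - 1) = 1" .
  have "r ^ CARD('a) = r ^ Suc (CARD('a) - 1)" using q2 by (simp del: power_Suc)
  also have "\<dots> = r * r ^ (CARD('a) - 1)" by (simp only: power_Suc)
  finally have rq: "r ^ (CARD('a) ^ 1) = r" using r1 by simp
  define R where "R = {x::'a alg_closure. x ^ (CARD('a) ^ 1) = x}"
  have cardR: "card R = CARD('a) ^ 1" unfolding R_def by (rule K_card) simp
  have finR: "finite R" using cardR card_ge_0_finite[of R] finite_UNIV_card_ge_0[where 'a='a]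
    by simp
  have sub: "range to_ac \<subseteq> R" unfolding R_def using to_ac_frob[where m=1] by auto
  have "card (range (to_ac :: 'a \<Rightarrow> 'a alg_closure)) = CARD('a)"
    by (rule card_image[OF inj_on_subset[OF inj_to_ac]]) simp
  hence "range to_ac = R" using cardR by (intro card_subset_eq[OF finR sub]) simp
  moreover have "r \<in> R" using rq by (simp add: R_def)
  ultimately obtain c where c: "r = to_ac c" by blast
  have c0: "c \<noteq> 0" using r0 c by auto
  have "\<psi> w = r * \<psi> v" using pv by (simp add: r_def)
  also have "\<dots> = \<psi> (c *s v)" by (simp add: c psi_scale)
  finally have "w = c *s v" using psi_inj by (simp add: inj_eq)
  thus ?thesis using c0 by blast
qed

lemma sum_points:
  assumes W: "vec.subspace W"
  shows "(\<Sum>x\<in>W. hh x) = - (\<Sum>P\<in>points_of W. hh (rep P))"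
proof -
  have "(\<Sum>x\<in>W. hh x) = (\<Sum>x\<in>W - {0}. hh x)"
    by (rule sum.mono_neutral_right) (auto simp: hh_0)
  also have "\<dots> = (\<Sum>P\<in>points_of W. \<Sum>x\<in>{x. x \<in> W - {0} \<and> vec.span {x} = P}. hh x)"
  proof (rule sum.group[symmetric])
    show "(\<lambda>x. vec.span {x}) ` (W - {0}) \<subseteq> points_of W"
    proof
      fix P assume "P \<in> (\<lambda>x. vec.span {x}) ` (W - {0})"
      then obtain x where x: "x \<in> W" "x \<noteq> 0" "P = vec.span {x}" by blast
      have "P \<in> pg_points" using x by (auto simp: pg_points_def)
      moreover have "P \<subseteq> W" using vec.span_minimal[of "{x}" W] x W by auto
      ultimately show "P \<in> points_of W" by (simp add: points_of_def)
    qed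
  qed auto
  also have "\<dots> = (\<Sum>P\<in>points_of W. - hh (rep P))"
  proof (rule sum.cong[OF refl])
    fix P assume P: "P \<in> points_of W"
    hence Ppg: "P \<in> pg_points" and PW: "P \<subseteq> W" by (auto simp: points_of_def)
    define v where "v = rep P"
    have v0: "v \<noteq> 0" and Pv: "P = vec.span {v}" using rep[OF Ppg] by (auto simp: v_def)
    have fib: "{x. x \<in> W - {0} \<and> vec.span {x} = P} = (\<lambda>c. c *s v) ` (UNIV - {0})"
    proof (rule subset_antisym)
      show "{x. x \<in> W - {0} \<and> vec.span {x} = P} \<subseteq> (\<lambda>c. c *s v) ` (UNIV - {0})"
      proof
        fix x assume "x \<in> {x. x \<in> W - {0} \<and> vec.span {x} = P}"
        hence x: "x \<in> W" "x \<noteq> 0" "vec.span {x} = P" by auto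
        have "x \<in> vec.span {x}" by (rule vec.span_base) simp
        hence "x \<in> range (\<lambda>k. k *s v)" using x(3) Pv by (simp add: vec.span_singleton)
        then obtain k where k: "x = k *s v" by blast
        have "k \<noteq> 0" using k x(2) by auto
        thus "x \<in> (\<lambda>c. c *s v) ` (UNIV - {0})" using k by blast
      qed
    next
      show "(\<lambda>c. c *s v) ` (UNIV - {0}) \<subseteq> {x. x \<in> W - {0} \<and> vec.span {x} = P}"
      proof
        fix x assume "x \<in> (\<lambda>c. c *s v) ` (UNIV - {0})"
        then obtain c where c: "c \<noteq> 0" "x = c *s v" by blast
        have "x \<noteq> 0" using c v0 by simp
        moreover have "x \<in> P" unfolding Pv vec.span_singleton using c by blast
        moreover have "vec.span {x} = P" using c Pv span_scale_eq[OF c(1)] by simp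
        ultimately show "x \<in> {x. x \<in> W - {0} \<and> vec.span {x} = P}" using PW by blast
      qed
    qed
    have inj: "inj_on (\<lambda>c. c *s v) (UNIV - {0})"
      using v0 by (auto simp: inj_on_def)
    have "(\<Sum>x\<in>{x. x \<in> W - {0} \<and> vec.span {x} = P}. hh x) = (\<Sum>c\<in>UNIV - {0}. hh (c *s v))"
      unfolding fib by (simp add: sum.reindex[OF inj])
    also have "\<dots> = (\<Sum>c\<in>UNIV - {0::'a}. hh v)" by (intro sum.cong refl) (simp add: hh_scale)
    also have "\<dots> = of_nat (CARD('a) - 1) * hh v" by (simp add: card_Diff_singleton)
    also have "of_nat (CARD('a) - 1) = (of_nat CARD('a) - 1 :: 'a alg_closure)"
      using ff_card_ge2[where 'a='a] by (simp add: of_nat_diff)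
    also have "\<dots> = -1" by (simp add: to_ac_of_nat_card)
    finally show "(\<Sum>x\<in>{x. x \<in> W - {0} \<and> vec.span {x} = P}. hh x) = - hh (rep P)"
      by (simp add: v_def)
  qed
  also have "\<dots> = - (\<Sum>P\<in>points_of W. hh (rep P))" by (simp add: sum_negf)
  finally show ?thesis .
qed

end

context psi_setup
begin

lemma sum_W_zero:
  assumes W: "vec.subspace W" and b1: "b1 \<in> W" and b2: "b2 \<in> W" and b20: "b2 \<noteq> 0"
    and nb: "b1 \<notin> vec.span {b2}"
  shows "(\<Sum>x\<in>W. hh x) = 0"
proof -
  define F where "F x = (\<lambda>(s::'a, t::'a). x + s *s b1 + t *s b2)" for x
  define L where "L x = range (F x)" for x
  have Fst: "F x (s, t) = x + s *s b1 + t *s b2" for x s t by (simp add: F_def)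
  have injF: "inj (F x)" for x
  proof (rule injI)
    fix p p' assume eq: "F x p = F x p'"
    obtain s t where p: "p = (s, t)" by (cases p)
    obtain s' t' where p': "p' = (s', t')" by (cases p')
    have eq1: "x + s *s b1 + t *s b2 = x + s' *s b1 + t' *s b2" using eq by (simp add: Fst p p')
    have eq2: "(s - s') *s b1 = (t' - t) *s b2"
    proof -
      have "(s - s') *s b1 - (t' - t) *s b2 = (x + s *s b1 + t *s b2) - (x + s' *s b1 + t' *s b2)"
        by (simp add: vector_sub_rdistrib algebra_simps)
      also have "\<dots> = 0" by (simp only: eq1 diff_self)
      finally show ?thesis by simp
    qed
    have ss: "s = s'"
    proof (rule ccontr)
      assume ne: "s \<noteq> s'"
      have "(t' - t) *s b2 \<in> vec.span {b2}" by (intro vec.span_scale vec.span_base) simp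
      hence "(s - s') *s b1 \<in> vec.span {b2}" using eq2 by simp
      hence "inverse (s - s') *s ((s - s') *s b1) \<in> vec.span {b2}" by (rule vec.span_scale)
      moreover have "inverse (s - s') *s ((s - s') *s b1) = b1"
        using ne by (simp only: vec.scale_scale) simp
      ultimately have "b1 \<in> vec.span {b2}" by simp
      thus False using nb by contradiction
    qed
    have "(t' - t) *s b2 = 0" using eq2 ss by simp
    hence "t = t'" using b20 by simp
    thus "p = p'" using ss p p' by simp
  qed
  have Lmem: "\<exists>s t. z = F x (s, t)" if "z \<in> L x" for z x
    using that unfolding L_def by auto
  have Fsub: "F x (s, t) \<in> W" if "x \<in> W" for x s t
    unfolding Fst using that W b1 b2 by (intro vec.subspace_add vec.subspace_scale)
  have Lsub: "L x \<subseteq> W" if "x \<in> W" for x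
  proof
    fix z assume "z \<in> L x"
    then obtain s t where "z = F x (s, t)" using Lmem by blast
    thus "z \<in> W" using Fsub[OF that] by simp
  qed
  have Lself: "x \<in> L x" for x
  proof -
    have "x = F x (0, 0)" by (simp add: Fst)
    thus ?thesis unfolding L_def by (rule range_eqI)
  qed
  have Lshift: "L y = L x" if yL: "y \<in> L x" for x y
  proof -
    obtain s0 t0 where y: "y = F x (s0, t0)" using Lmem[OF yL] by blast
    show ?thesis
    proof (rule subset_antisym)
      show "L y \<subseteq> L x"
      proof
        fix z assume "z \<in> L y"
        then obtain s t where z: "z = F y (s, t)" using Lmem by blast
        have "z = F x (s0 + s, t0 + t)"
          by (simp add: z y Fst vector_sadd_rdistrib algebra_simps)
        thus "z \<in> L x" unfolding L_def by (rule range_eqI)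
      qed
    next
      show "L x \<subseteq> L y"
      proof
        fix z assume "z \<in> L x"
        then obtain s t where z: "z = F x (s, t)" using Lmem by blast
        have "z = F y (s - s0, t - t0)"
          by (simp add: z y Fst vector_sub_rdistrib algebra_simps)
        thus "z \<in> L y" unfolding L_def by (rule range_eqI)
      qed
    qed
  qed
  have fiber: "{x. x \<in> W \<and> L x = L x0} = L x0" if x0: "x0 \<in> W" for x0
  proof (rule subset_antisym)
    show "{x. x \<in> W \<and> L x = L x0} \<subseteq> L x0" using Lself by blast
  next
    show "L x0 \<subseteq> {x. x \<in> W \<and> L x = L x0}"
      using Lsub[OF x0] Lshift by blast
  qed
  have Lsum: "(\<Sum>y\<in>L x0. hh y) = 0" for x0
  proof -
    have "(\<Sum>y\<in>L x0. hh y) = (\<Sum>p\<in>UNIV. hh (F x0 p))"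
      unfolding L_def by (simp add: sum.reindex[OF injF])
    also have "\<dots> = (\<Sum>p\<in>(UNIV::'a set) \<times> (UNIV::'a set). hh (F x0 p))" by simp
    also have "\<dots> = (\<Sum>s\<in>(UNIV::'a set). \<Sum>t\<in>(UNIV::'a set). hh (F x0 (s, t)))"
      by (rule sum.cartesian_product')
    also have "\<dots> = (\<Sum>s\<in>(UNIV::'a set). - (\<psi> b2 ^ (CARD('a) - 1)))"
    proof (rule sum.cong[OF refl])
      fix s :: 'a
      have "(\<Sum>t\<in>(UNIV::'a set). hh (F x0 (s, t)))
          = (\<Sum>t\<in>(UNIV::'a set). (\<psi> x0 + to_ac s * \<psi> b1 + to_ac t * \<psi> b2) ^ (CARD('a) - 1))"
        by (simp add: hh_def Fst psi_add psi_scale)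
      also have "\<dots> = - (\<psi> b2 ^ (CARD('a) - 1))" by (rule powsum_shift)
      finally show "(\<Sum>t\<in>(UNIV::'a set). hh (F x0 (s, t))) = - (\<psi> b2 ^ (CARD('a) - 1))" .
    qed
    also have "\<dots> = - (of_nat CARD('a) * \<psi> b2 ^ (CARD('a) - 1))" by simp
    also have "\<dots> = 0" by (simp add: to_ac_of_nat_card)
    finally show ?thesis .
  qed
  have "(\<Sum>x\<in>W. hh x) = (\<Sum>Y\<in>L ` W. \<Sum>x\<in>{x. x \<in> W \<and> L x = Y}. hh x)"
    by (rule sum.group[symmetric]) auto
  also have "\<dots> = (\<Sum>Y\<in>L ` W. 0)"
  proof (rule sum.cong[OF refl])
    fix Y assume "Y \<in> L ` W"
    then obtain x0 where x0: "x0 \<in> W" "Y = L x0" by blast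
    show "(\<Sum>x\<in>{x. x \<in> W \<and> L x = Y}. hh x) = 0" using fiber[OF x0(1)] Lsum[of x0] x0(2) by simp
  qed
  also have "\<dots> = 0" by simp
  finally show ?thesis .
qed

end

lemma indep2:
  fixes u w :: "'a::field ^ 'n"
  assumes "u \<noteq> 0" "w \<notin> vec.span {u}"
  shows "vec.independent {w, u}" "card {w, u} = 2"
proof -
  have "u \<in> vec.span {u}" by (rule vec.span_base) simp
  hence wu: "w \<noteq> u" using assms(2) by blast
  have "vec.independent {u}" using assms(1) vec.independent_insert[of u "{}"] by simp
  thus "vec.independent {w, u}" using assms(2) wu vec.independent_insert[of w "{u}"] by simp
  show "card {w, u} = 2" using wu by simp
qed

lemma dim2:
  fixes u w :: "'a::field ^ 'n"
  assumes "u \<in> W" "w \<in> W" "u \<noteq> 0" "w \<notin> vec.span {u}"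
  shows "2 \<le> vec.dim W"
proof -
  have "card {w, u} \<le> vec.dim W"
    by (rule vec.independent_card_le_dim) (use assms indep2[OF assms(3,4)] in auto)
  thus ?thesis using indep2[OF assms(3,4)] by simp
qed

theorem theorem5p1:
  fixes B :: "('a::{finite,field} ^ 'n) set set set"
  assumes "subspace_design_2 k lam B"
  shows "\<exists>f :: ('a ^ 'n) set \<Rightarrow> 'a ^ 'n. additive_under pg_points B f"
proof -
  from assms have lam1: "lam \<ge> 1"
    and blocks: "\<forall>b\<in>B. \<exists>W. vec.subspace W \<and> vec.dim W = k \<and> b = points_of W"
    and pairs: "\<forall>P\<in>pg_points. \<forall>Q\<in>pg_points. P \<noteq> Q \<longrightarrow> card {b\<in>B. P \<in> b \<and> Q \<in> b} = lam"
    unfolding subspace_design_2_def by auto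
  show ?thesis
  proof (cases "CARD('n) = 1")
    case True
    have PQ: "P = Q" if "P \<in> pg_points" "Q \<in> pg_points" for P Q :: "('a ^ 'n) set"
    proof -
      define u where "u = rep P"
      define w where "w = rep Q"
      have u: "u \<noteq> 0" "P = vec.span {u}" using rep[OF that(1)] by (auto simp: u_def)
      have w: "w \<noteq> 0" "Q = vec.span {w}" using rep[OF that(2)] by (auto simp: w_def)
      have "w \<in> vec.span {u}"
      proof (rule ccontr)
        assume "w \<notin> vec.span {u}"
        hence "2 \<le> vec.dim (UNIV :: ('a^'n) set)" using dim2[of u UNIV w] u(1) by simp
        moreover have "vec.dim (UNIV :: ('a^'n) set) = CARD('n)" by (simp add: card_cart_basis)
        ultimately show False using True by simp
      qed
      then obtain c where c: "w = c *s u" by (auto simp: vec.span_singleton)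
      have "c \<noteq> 0" using c w(1) by auto
      hence "vec.span {c *s u} = vec.span {u}" by (rule span_scale_eq)
      thus "P = Q" using u w c by simp
    qed
    have "inj_on (\<lambda>_::('a^'n) set. 0 :: 'a^'n) pg_points" unfolding inj_on_def using PQ by blast
    thus ?thesis unfolding additive_under_def by (intro exI[of _ "\<lambda>_. 0"]) simp
  next
    case False
    hence n2: "CARD('n) \<ge> 2" using finite_UNIV_card_ge_0[where 'a='n, OF finite_class.finite_UNIV] by linarith
    have "\<exists>i j::'n. i \<noteq> j"
    proof (rule ccontr)
      assume "\<not> (\<exists>i j::'n. i \<noteq> j)"
      hence "(UNIV :: 'n set) \<subseteq> {undefined}" by auto
      hence "CARD('n) \<le> card {undefined :: 'n}" by (intro card_mono) auto
      thus False using n2 by simp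
    qed
    then obtain i j :: 'n where ij: "i \<noteq> j" by blast
    define u where "u = (axis i 1 :: 'a ^ 'n)"
    define w where "w = (axis j 1 :: 'a ^ 'n)"
    have u0: "u \<noteq> 0" by (simp add: u_def)
    have wu: "w \<notin> vec.span {u}"
    proof
      assume "w \<in> vec.span {u}"
      then obtain c where "w = c *s u" by (auto simp: vec.span_singleton)
      hence "w $ j = c * u $ j" by simp
      thus False using ij by (simp add: u_def w_def axis_def)
    qed
    have w0: "w \<noteq> 0" by (simp add: w_def)
    define P where "P = vec.span {u}"
    define Q where "Q = vec.span {w}"
    have Ppg: "P \<in> pg_points" using u0 by (auto simp: P_def pg_points_def)
    have Qpg: "Q \<in> pg_points" using w0 by (auto simp: Q_def pg_points_def)
    have wQ: "w \<in> Q" unfolding Q_def by (rule vec.span_base) simp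
    have uP: "u \<in> P" unfolding P_def by (rule vec.span_base) simp
    have PQ: "P \<noteq> Q" using wQ wu by (auto simp: P_def)
    have "card {b\<in>B. P \<in> b \<and> Q \<in> b} = lam" using pairs Ppg Qpg PQ by blast
    hence "{b\<in>B. P \<in> b \<and> Q \<in> b} \<noteq> {}" using lam1 by (intro notI) simp
    then obtain b where b: "b \<in> B" "P \<in> b" "Q \<in> b" by blast
    obtain W0 where W0: "vec.subspace W0" "vec.dim W0 = k" "b = points_of W0" using blocks b(1) by blast
    have "P \<subseteq> W0" "Q \<subseteq> W0" using b(2,3) W0(3) by (auto simp: points_of_def)
    hence "u \<in> W0" "w \<in> W0" using uP wQ by auto
    hence k2: "k \<ge> 2" using dim2[of u W0 w] u0 wu W0(2) by simp
    obtain \<psi> :: "'a ^ 'n \<Rightarrow> 'a alg_closure" where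
      psi: "\<forall>v w. \<psi> (v + w) = \<psi> v + \<psi> w" "\<forall>c v. \<psi> (c *s v) = to_ac c * \<psi> v" "inj \<psi>"
           "range \<psi> = {x. x ^ (CARD('a) ^ CARD('n)) = x}"
      using exists_psi by blast
    interpret ps: psi_setup \<psi> by unfold_locales (use psi in auto)
    define f where "f P = inv_into UNIV \<psi> (ps.hh (rep P))" for P
    have psif: "\<psi> (f P) = ps.hh (rep P)" for P
      unfolding f_def by (rule f_inv_into_f[OF ps.hh_range])
    have inj: "inj_on f pg_points"
    proof (rule inj_onI)
      fix P1 P2 assume P1: "P1 \<in> pg_points" and P2: "P2 \<in> pg_points" and eq: "f P1 = f P2"
      have "ps.hh (rep P1) = ps.hh (rep P2)" using psif[of P1] psif[of P2] eq by simp
      then obtain c where c: "c \<noteq> 0" "rep P2 = c *s rep P1"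
        using ps.hh_eq rep(1)[OF P1] rep(1)[OF P2] by blast
      have "P2 = vec.span {rep P2}" by (rule rep(2)[OF P2])
      also have "\<dots> = vec.span {rep P1}" using c span_scale_eq by simp
      also have "\<dots> = P1" by (rule rep(2)[OF P1, symmetric])
      finally show "P1 = P2" by simp
    qed
    have sums: "(\<Sum>x\<in>b. f x) = 0" if bB: "b \<in> B" for b
    proof -
      obtain W where W: "vec.subspace W" "vec.dim W = k" "b = points_of W" using blocks bB by blast
      obtain b2 where b2: "b2 \<in> W" "b2 \<noteq> 0"
      proof (rule ccontr)
        assume "\<not> thesis"
        hence "W \<subseteq> vec.span {}" using that by auto
        hence "vec.dim W \<le> card ({} :: ('a^'n) set)" by (intro vec.dim_le_card) auto
        thus False using W(2) k2 by simp
      qed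
      obtain b1 where b1: "b1 \<in> W" "b1 \<notin> vec.span {b2}"
      proof (rule ccontr)
        assume "\<not> thesis"
        hence "W \<subseteq> vec.span {b2}" using that by auto
        hence "vec.dim W \<le> card {b2}" by (intro vec.dim_le_card) auto
        thus False using W(2) k2 by simp
      qed
      have "\<psi> (\<Sum>x\<in>b. f x) = (\<Sum>x\<in>b. ps.hh (rep x))" by (simp add: ps.psi_sum psif)
      also have "\<dots> = - (\<Sum>x\<in>W. ps.hh x)" using ps.sum_points[OF W(1)] W(3) by simp
      also have "(\<Sum>x\<in>W. ps.hh x) = 0" by (rule ps.sum_W_zero[OF W(1) b1(1) b2(1) b2(2) b1(2)])
      finally have "\<psi> (\<Sum>x\<in>b. f x) = \<psi> 0" by (simp add: ps.psi_0)
      thus ?thesis using psi(3) by (simp add: inj_eq)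
    qed
    show ?thesis unfolding additive_under_def using inj sums by blast
  qed
qed

end
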